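(* Let $N>0$ and $\tau\in(0,1)$. Then: (i) The following are equivalent: $\beta_1^{**}(\tau)=4(N+1)$; [$\underline\beta_1(\tau)=4(N+1)$ and $\beta_2^*(\tau)=\overline\beta_2(\tau)$]; $\tau=\tau_0^{(1)}$. In particular $\beta_1^{**}(\tau)-\tau\beta_2^*(\tau)=2(N+1)$ if and only if $\tau=\tau_0^{(1)}$. (ii) The following are equivalent: $\beta_2^{**}(\tau)=4$; [$\underline\beta_2(\tau)=4$ and $\beta_1^*(\tau)=\overline\beta_1(\tau)$]; $\tau=\tau_0^{(2)}$. In particular $\beta_2^{**}(\tau)-\tau\beta_1^*(\tau)=2$ if and only if $\tau=\tau_0^{(2)}$. Moreover $0<\tau_0^{(2)}<\tau_0^{(1)}<\frac12$.
   Context: With $D=(N+1)^2+2\tau(N+1)+1$: $$\underline\beta_1(\tau)=\tfrac{2}{1-\tau^2}(N+1+\tau+\tau\sqrt D),\qquad \overline\beta_1(\tau)=\tfrac{2}{1-\tau^2}(N+1+\tau+\sqrt D),$$ $$\underline\beta_2(\tau)=\tfrac{2}{1-\tau^2}(1+\tau(N+1)+\tau\sqrt D),\qquad \overline\beta_2(\tau)=\tfrac{2}{1-\tau^2}(1+\tau(N+1)+\sqrt D);$$ $$\beta_1^*(\tau)=4(N+1)+8\tau,\quad \beta_2^*(\tau)=4+8\tau(N+1),\quad \beta_1^{**}(\tau)=2\tau\beta_2^*(\tau)=8\tau(1+2\tau(N+1)),\quad \beta_2^{**}(\tau)=2\tau\beta_1^*(\tau)=8\tau(N+1+2\tau);$$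 $$\tau_0^{(1)}=\frac{N+1}{1+\sqrt{1+4(N+1)^2}},\qquad \tau_0^{(2)}=\frac{1}{N+1+\sqrt{(N+1)^2+4}}.$$ *)

theory Defs
  imports Complex_Main
begin

definition DD :: "nat \<Rightarrow> real \<Rightarrow> real" where
  "DD N \<tau> = (real N + 1)^2 + 2*\<tau>*(real N + 1) + 1"

definition beta1_low :: "nat \<Rightarrow> real \<Rightarrow> real" where
  "beta1_low N \<tau> = 2/(1-\<tau>^2) * (real N + 1 + \<tau> + \<tau> * sqrt (DD N \<tau>))"
definition beta1_up :: "nat \<Rightarrow> real \<Rightarrow> real" where
  "beta1_up N \<tau> = 2/(1-\<tau>^2) * (real N + 1 + \<tau> + sqrt (DD N \<tau>))"
definition beta2_low :: "nat \<Rightarrow> real \<Rightarrow> real" where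
  "beta2_low N \<tau> = 2/(1-\<tau>^2) * (1 + \<tau>*(real N + 1) + \<tau> * sqrt (DD N \<tau>))"
definition beta2_up :: "nat \<Rightarrow> real \<Rightarrow> real" where
  "beta2_up N \<tau> = 2/(1-\<tau>^2) * (1 + \<tau>*(real N + 1) + sqrt (DD N \<tau>))"

definition beta1_star :: "nat \<Rightarrow> real \<Rightarrow> real" where
  "beta1_star N \<tau> = 4*(real N + 1) + 8*\<tau>"
definition beta2_star :: "nat \<Rightarrow> real \<Rightarrow> real" where
  "beta2_star N \<tau> = 4 + 8*\<tau>*(real N + 1)"
definition beta1_sstar :: "nat \<Rightarrow> real \<Rightarrow> real" where
  "beta1_sstar N \<tau> = 2*\<tau>*beta2_star N \<tau>"
definition beta2_sstar :: "nat \<Rightarrow> real \<Rightarrow> real" where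
  "beta2_sstar N \<tau> = 2*\<tau>*beta1_star N \<tau>"

definition tau0_1 :: "nat \<Rightarrow> real" where
  "tau0_1 N = (real N + 1) / (1 + sqrt (1 + 4*(real N + 1)^2))"
definition tau0_2 :: "nat \<Rightarrow> real" where
  "tau0_2 N = 1 / (real N + 1 + sqrt ((real N + 1)^2 + 4))"

end

theory Submission
  imports Defs
begin

lemma root_uniq:
  fixes a b c x y :: real
  assumes "a*x^2+b*x+c=0" "a*y^2+b*y+c=0" "x>0" "y>0" "a\<ge>0" "b>0"
  shows "x=y"
proof -
  have "(x-y)*(a*(x+y)+b) = 0" using assms by (simp add: algebra_simps power2_eq_square)
  moreover have "a*(x+y)+b>0" using assms by (smt (verit) mult_nonneg_nonneg)
  ultimately show ?thesis by simp
qed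


lemma tau1_root: fixes M :: real assumes "M>0"
  shows "4*M*(M/(1+sqrt(1+4*M^2)))^2 + 2*(M/(1+sqrt(1+4*M^2))) - M = 0"
proof -
  define r where "r = sqrt(1+4*M^2)"
  have r2: "r^2 = 1+4*M^2" unfolding r_def by simp
  have rp: "r\<ge>0" unfolding r_def by simp
  define x where "x = M/(1+r)"
  have xd: "x*(1+r) = M" unfolding x_def using rp by simp
  have "(1+r)^2*(4*M*x^2 + 2*x - M) = 4*M*(x*(1+r))^2 + 2*(x*(1+r))*(1+r) - M*(1+r)^2"
    by (simp add: algebra_simps power2_eq_square)
  also have "\<dots> = M*(4*M^2 + 2*(1+r) - (1+r)^2)" unfolding xd by (simp add: algebra_simps power2_eq_square)
  also have "\<dots> = 0" using r2 by (simp add: power2_eq_square algebra_simps)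
  finally have "(1+r)^2*(4*M*x^2 + 2*x - M) = 0" .
  with rp have "4*M*x^2 + 2*x - M = 0" by simp
  thus ?thesis unfolding x_def r_def .
qed

lemma tau2_root: fixes M :: real assumes "M>0"
  shows "4*(1/(M+sqrt(M^2+4)))^2 + 2*M*(1/(M+sqrt(M^2+4))) - 1 = 0"
proof -
  define r where "r = sqrt(M^2+4)"
  have r2: "r^2 = M^2+4" unfolding r_def by (simp add: add_nonneg_nonneg)
  have rp: "r\<ge>0" unfolding r_def by simp
  define x where "x = 1/(M+r)"
  have xd: "x*(M+r) = 1" unfolding x_def using rp assms by simp
  have "(M+r)^2*(4*x^2 + 2*M*x - 1) = 4*(x*(M+r))^2 + 2*M*(x*(M+r))*(M+r) - (M+r)^2"
    by (simp add: algebra_simps power2_eq_square)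
  also have "\<dots> = 4 + 2*M*(M+r) - (M+r)^2" unfolding xd by simp
  also have "\<dots> = 0" using r2 by (simp add: power2_eq_square algebra_simps)
  finally have "(M+r)^2*(4*x^2 + 2*M*x - 1) = 0" .
  with rp assms have "4*x^2 + 2*M*x - 1 = 0" by simp
  thus ?thesis unfolding x_def r_def .
qed



lemma sq_eq_pos: fixes a b :: real assumes "a^2 = b^2" "a\<ge>0" "b\<ge>0" shows "a=b"
  using assms by (metis power2_eq_iff_nonneg)

lemma part1:
  fixes M t s :: real
  assumes M: "M>0" and t: "0<t" "t<1" and s: "s\<ge>0" "s^2 = M^2+2*t*M+1"
  shows "((M+t+t*s = 2*M*(1-t^2) \<and> (2+4*t*M)*(1-t^2) = 1+t*M+s) \<longleftrightarrow> 4*M*t^2+2*t-M = 0)"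
proof
  assume h: "M+t+t*s = 2*M*(1-t^2) \<and> (2+4*t*M)*(1-t^2) = 1+t*M+s"
  hence "t*((2+4*t*M)*(1-t^2)-1-t*M) = 2*M*(1-t^2) - M - t" by (simp add: algebra_simps)
  hence "(t^2-1)*(4*M*t^2+2*t-M) = 0" by (simp add: algebra_simps power2_eq_square power3_eq_cube)
  moreover have "t^2-1 \<noteq> 0" using t by (smt (verit) mult_less_cancel_right1 power2_eq_square)
  ultimately show "4*M*t^2+2*t-M = 0" by simp
next
  assume q: "4*M*t^2+2*t-M = 0"
  have "(t*s)^2 = t^2*s^2" by (simp add: power_mult_distrib)
  also have "\<dots> - M^2/4 = (4*M*t^2+2*t-M)*(t/2+M/4)" using s
    by (simp add: algebra_simps power2_eq_square power3_eq_cube)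
  finally have "(t*s)^2 = (M/2)^2" using q by (simp add: power2_eq_square)
  hence ts: "t*s = M/2" using sq_eq_pos[of "t*s" "M/2"] t s M by simp
  have e1: "M+t+t*s = 2*M*(1-t^2)" using ts q by (simp add: algebra_simps power2_eq_square)
  have "t*((2+4*t*M)*(1-t^2)) - t - t^2*M - M/2 = (4*M*t^2+2*t-M)*(1/2-t^2)"
    by (simp add: algebra_simps power2_eq_square power3_eq_cube)
  hence z: "t*((2+4*t*M)*(1-t^2)) - t - t^2*M - M/2 = 0" using q by simp
  have "t*(1+t*M+s) = t + t^2*M + M/2" using ts by (simp add: algebra_simps power2_eq_square)
  hence "t*((2+4*t*M)*(1-t^2)) = t*(1+t*M+s)" using z by linarith
  hence "(2+4*t*M)*(1-t^2) = 1+t*M+s" using t by simp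
  with e1 show "M+t+t*s = 2*M*(1-t^2) \<and> (2+4*t*M)*(1-t^2) = 1+t*M+s" by simp
qed

lemma part2:
  fixes M t s :: real
  assumes M: "M>0" and t: "0<t" "t<1" and s: "s\<ge>0" "s^2 = M^2+2*t*M+1"
  shows "((1+t*M+t*s = 2*(1-t^2) \<and> (2*M+4*t)*(1-t^2) = M+t+s) \<longleftrightarrow> 4*t^2+2*M*t-1 = 0)"
proof
  assume h: "1+t*M+t*s = 2*(1-t^2) \<and> (2*M+4*t)*(1-t^2) = M+t+s"
  hence "t*((2*M+4*t)*(1-t^2)-M-t) = 2*(1-t^2) - 1 - t*M" by (simp add: algebra_simps)
  hence "(1-t^2)*(4*t^2+2*M*t-1) = 0" by (simp add: algebra_simps power2_eq_square power3_eq_cube)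
  moreover have "1-t^2 \<noteq> 0" using t by (smt (verit) mult_less_cancel_right1 power2_eq_square)
  ultimately show "4*t^2+2*M*t-1 = 0" by simp
next
  assume q: "4*t^2+2*M*t-1 = 0"
  have "(t*s)^2 = t^2*s^2" by (simp add: power_mult_distrib)
  also have "\<dots> - 1/4 = (4*t^2+2*M*t-1)*(M*t/2+1/4)" using s
    by (simp add: algebra_simps power2_eq_square power3_eq_cube)
  finally have "(t*s)^2 = (1/2)^2" using q by (simp add: power2_eq_square)
  hence ts: "t*s = 1/2" using sq_eq_pos[of "t*s" "1/2"] t s M by simp
  have e1: "1+t*M+t*s = 2*(1-t^2)" using ts q by (simp add: algebra_simps power2_eq_square)
  have "t*((2*M+4*t)*(1-t^2)) - t*M - t^2 - 1/2 = (4*t^2+2*M*t-1)*(1/2-t^2)"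
    by (simp add: algebra_simps power2_eq_square power3_eq_cube)
  hence z: "t*((2*M+4*t)*(1-t^2)) - t*M - t^2 - 1/2 = 0" using q by simp
  have "t*(M+t+s) = t*M + t^2 + 1/2" using ts by (simp add: algebra_simps power2_eq_square)
  hence "t*((2*M+4*t)*(1-t^2)) = t*(M+t+s)" using z by linarith
  hence "(2*M+4*t)*(1-t^2) = M+t+s" using t by simp
  with e1 show "1+t*M+t*s = 2*(1-t^2) \<and> (2*M+4*t)*(1-t^2) = M+t+s" by simp
qed




theorem mainTheorem12:
  fixes N :: nat and \<tau> :: real
  assumes "N > 0" and "0 < \<tau>" and "\<tau> < 1"
  shows "((beta1_sstar N \<tau> = 4*(real N + 1)
            \<longleftrightarrow> (beta1_low N \<tau> = 4*(real N + 1) \<and> beta2_star N \<tau> = beta2_up N \<tau>))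
        \<and> ((beta1_low N \<tau> = 4*(real N + 1) \<and> beta2_star N \<tau> = beta2_up N \<tau>)
            \<longleftrightarrow> \<tau> = tau0_1 N)
        \<and> (beta1_sstar N \<tau> - \<tau> * beta2_star N \<tau> = 2*(real N + 1) \<longleftrightarrow> \<tau> = tau0_1 N))
       \<and> ((beta2_sstar N \<tau> = 4
            \<longleftrightarrow> (beta2_low N \<tau> = 4 \<and> beta1_star N \<tau> = beta1_up N \<tau>))
        \<and> ((beta2_low N \<tau> = 4 \<and> beta1_star N \<tau> = beta1_up N \<tau>)
            \<longleftrightarrow> \<tau> = tau0_2 N)
        \<and> (beta2_sstar N \<tau> - \<tau> * beta1_star N \<tau> = 2 \<longleftrightarrow> \<tau> = tau0_2 N))
       \<and> 0 < tau0_2 N \<and> tau0_2 N < tau0_1 N \<and> tau0_1 N < 1/2"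
  
proof -
  define M where "M = real N + 1"
  define t where "t = \<tau>"
  define s where "s = sqrt (DD N \<tau>)"
  have M2: "M \<ge> 2" using assms(1) unfolding M_def by simp
  hence Mp: "M > 0" by simp
  have Dp: "DD N \<tau> \<ge> 0" unfolding DD_def using assms by (intro add_nonneg_nonneg) auto
  have s0: "s \<ge> 0" unfolding s_def using Dp by simp
  have "s^2 = DD N \<tau>" unfolding s_def using Dp by simp
  hence s2: "s^2 = M^2+2*t*M+1" unfolding M_def t_def by (simp add: DD_def)
  have cp: "1-t^2 > 0" unfolding t_def using assms
    by (smt (verit) mult_less_cancel_right1 power2_eq_square)
  have cv: "\<And>X Y. (2/(1-t^2)*X = Y) \<longleftrightarrow> X = Y*(1-t^2)/2" using cp
    by (auto simp: field_simps)
  have L1: "beta1_low N \<tau> = 4*(real N + 1) \<longleftrightarrow> M+t+t*s = 2*M*(1-t^2)"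
    unfolding beta1_low_def M_def[symmetric] s_def[symmetric] t_def[symmetric] cv by (auto simp: s_def t_def)
  have U2: "beta2_star N \<tau> = beta2_up N \<tau> \<longleftrightarrow> (2+4*t*M)*(1-t^2) = 1+t*M+s"
    unfolding beta2_up_def beta2_star_def M_def[symmetric] s_def[symmetric] t_def[symmetric]
    by (subst eq_commute, subst cv) (auto simp: algebra_simps s_def t_def)
  have L2: "beta2_low N \<tau> = 4 \<longleftrightarrow> 1+t*M+t*s = 2*(1-t^2)"
    unfolding beta2_low_def M_def[symmetric] s_def[symmetric] t_def[symmetric] cv by (auto simp: s_def t_def)
  have U1: "beta1_star N \<tau> = beta1_up N \<tau> \<longleftrightarrow> (2*M+4*t)*(1-t^2) = M+t+s"
    unfolding beta1_up_def beta1_star_def M_def[symmetric] s_def[symmetric] t_def[symmetric]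
    by (subst eq_commute, subst cv) (auto simp: algebra_simps s_def t_def)
  have tp: "0<t" "t<1" using assms unfolding t_def by auto
  have S1: "beta1_sstar N \<tau> = 4*(real N + 1) \<longleftrightarrow> 4*M*t^2+2*t-M = 0"
    unfolding beta1_sstar_def beta2_star_def M_def[symmetric] t_def[symmetric]
    by (auto simp: algebra_simps power2_eq_square)
  have C1: "beta1_sstar N \<tau> - \<tau> * beta2_star N \<tau> = 2*(real N + 1) \<longleftrightarrow> 4*M*t^2+2*t-M = 0"
    unfolding beta1_sstar_def beta2_star_def M_def[symmetric] t_def[symmetric]
    by (auto simp: algebra_simps power2_eq_square)
  have S2: "beta2_sstar N \<tau> = 4 \<longleftrightarrow> 4*t^2+2*M*t-1 = 0"
    unfolding beta2_sstar_def beta1_star_def M_def[symmetric] t_def[symmetric]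
    by (auto simp: algebra_simps power2_eq_square)
  have C2: "beta2_sstar N \<tau> - \<tau> * beta1_star N \<tau> = 2 \<longleftrightarrow> 4*t^2+2*M*t-1 = 0"
    unfolding beta2_sstar_def beta1_star_def M_def[symmetric] t_def[symmetric]
    by (auto simp: algebra_simps power2_eq_square)
  define r1 where "r1 = sqrt(1+4*M^2)"
  define r2 where "r2 = sqrt(M^2+4)"
  have r1s: "r1^2 = 1+4*M^2" unfolding r1_def by simp
  have r2s: "r2^2 = M^2+4" unfolding r2_def by (simp add: add_nonneg_nonneg)
  have r1p: "r1 \<ge> 0" "r2 \<ge> 0" unfolding r1_def r2_def by auto
  have T1: "tau0_1 N = M/(1+r1)" unfolding tau0_1_def M_def r1_def by simp
  have T2: "tau0_2 N = 1/(M+r2)" unfolding tau0_2_def M_def r2_def by simp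
  have T1p: "tau0_1 N > 0" using T1 r1p Mp by simp
  have T2p: "tau0_2 N > 0" using T2 r1p Mp by simp
  have R1: "4*M*(tau0_1 N)^2 + 2*(tau0_1 N) - M = 0"
    using tau1_root[OF Mp] unfolding T1 r1_def .
  have R2: "4*(tau0_2 N)^2 + 2*M*(tau0_2 N) - 1 = 0"
    using tau2_root[OF Mp] unfolding T2 r2_def .
  have E1: "t = tau0_1 N \<longleftrightarrow> 4*M*t^2+2*t-M = 0"
  proof
    assume "t = tau0_1 N" thus "4*M*t^2+2*t-M = 0" using R1 by simp
  next
    assume h: "4*M*t^2+2*t-M = 0"
    show "t = tau0_1 N"
    proof (rule root_uniq)
      show "(4*M)*t^2 + 2*t + (-M) = 0" using h by simp
      show "(4*M)*(tau0_1 N)^2 + 2*(tau0_1 N) + (-M) = 0" using R1 by simp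
    qed (use tp T1p Mp in auto)
  qed
  have E2: "t = tau0_2 N \<longleftrightarrow> 4*t^2+2*M*t-1 = 0"
  proof
    assume "t = tau0_2 N" thus "4*t^2+2*M*t-1 = 0" using R2 by simp
  next
    assume h: "4*t^2+2*M*t-1 = 0"
    show "t = tau0_2 N"
    proof (rule root_uniq)
      show "4*t^2 + (2*M)*t + (-1) = 0" using h by simp
      show "4*(tau0_2 N)^2 + (2*M)*(tau0_2 N) + (-1) = 0" using R2 by simp
    qed (use tp T2p Mp in auto)
  qed
  note P1 = part1[OF Mp tp s0 s2]
  note P2 = part2[OF Mp tp s0 s2]
  have half: "tau0_1 N < 1/2"
  proof -
    have "(2*M)^2 < r1^2" using r1s by simp
    hence "2*M < r1" using r1p by (smt (verit) power_mono)
    thus ?thesis unfolding T1 using r1p Mp by (simp add: field_simps)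
  qed
  have lt: "tau0_2 N < tau0_1 N"
  proof -
    have "r1^2 < (2*M+1)^2" using r1s Mp by (simp add: power2_eq_square algebra_simps)
    hence a: "r1 < 2*M+1" using r1p Mp by (smt (verit) power_mono)
    have "M^2 < r2^2" using r2s by simp
    hence b: "M < r2" using r1p Mp by (smt (verit) power_mono)
    have "M*M \<ge> 2*M" using M2 by simp
    hence "1+r1 < M*(M+r2)" using a b Mp M2
      by (smt (verit) mult_strict_left_mono distrib_left)
    thus ?thesis unfolding T1 T2 using r1p Mp by (simp add: field_simps)
  qed
  show ?thesis
    using L1 U2 L2 U1 S1 C1 S2 C2 E1 E2 P1 P2 T2p half lt unfolding t_def by auto
qed

end
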